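(* Let $V(x)=x^2/2$, $\varepsilon\ge0$ and $\mathbf r\in\mathbb R^4$. The laws of the rescaled profiles $h_N$ under $\gamma^{\mathbf r}_{N,\varepsilon}$ are exponentially tight in $C([0,1];\mathbb R)$ at speed $N$: for every $M<\infty$ there is a compact $K_M\subset C([0,1];\mathbb R)$ with $\limsup_{N\to\infty}\frac1N\log\gamma^{\mathbf r}_{N,\varepsilon}(h_N\notin K_M)\le-M$.
   Context: $\mathcal H_{[-1,N+1]}(\phi)=\sum_{k=0}^{N}\frac12(\phi_{k+1}+\phi_{k-1}-2\phi_k)^2$. For $\mathbf r=(a,\alpha,b,\beta)$: $\psi^{(N)}(-1)=aN^2-\alpha N$, $\psi^{(N)}(0)=aN^2$, $\psi^{(N)}(N)=bN^2$, $\psi^{(N)}(N+1)=bN^2+\beta N$. $\gamma^{\mathbf r}_{N,\varepsilon}$ is the probability measure on $\phi:\{-1,\dots,N+1\}\to\mathbb R$ proportional to $e^{-\mathcal H_{[-1,N+1]}(\phi)}\prod_{k=1}^{N-1}(\varepsilon\delta_0(d\phi_k)+d\phi_k)\prod_{k\in\{-1,0,N,N+1\}}\delta_{\psi^{(N)}(k)}(d\phi_k)$. $h_N$ is the linear interpolation on $[0,1]$ of $h_N(k/N)=\phi_k/N^2$. *)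

theory Defs
  imports "HOL-Probability.Probability"
begin

definition config :: "nat \<Rightarrow> real \<times> real \<times> real \<times> real \<Rightarrow> (int \<Rightarrow> real) \<Rightarrow> int \<Rightarrow> real" where
  "config N r x k =
     (case r of (a, \<alpha>, b, \<beta>) \<Rightarrow>
       (if k = -1 then a * real N ^ 2 - \<alpha> * real N
        else if k = 0 then a * real N ^ 2
        else if k = int N then b * real N ^ 2
        else if k = int N + 1 then b * real N ^ 2 + \<beta> * real N
        else x k))"

definition hamiltonian :: "nat \<Rightarrow> (int \<Rightarrow> real) \<Rightarrow> real" where
  "hamiltonian N \<phi> = (\<Sum>k\<in>{0..int N}. (\<phi> (k+1) + \<phi> (k-1) - 2 * \<phi> k)^2 / 2)"

definition ref_measure :: "real \<Rightarrow> real measure" where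
  "ref_measure \<epsilon> = measure_of UNIV (sets borel)
     (\<lambda>A. ennreal \<epsilon> * indicator A 0 + emeasure lborel A)"

definition interior_measure :: "nat \<Rightarrow> real \<Rightarrow> (int \<Rightarrow> real) measure" where
  "interior_measure N \<epsilon> = PiM {1..int N - 1} (\<lambda>_. ref_measure \<epsilon>)"

text \<open>The probability measure gamma^r_{N,eps}, viewed on the interior coordinates
  (the boundary coordinates are deterministic, given by config).\<close>
definition gamma :: "nat \<Rightarrow> real \<Rightarrow> real \<times> real \<times> real \<times> real \<Rightarrow> (int \<Rightarrow> real) measure" where
  "gamma N \<epsilon> r =
     density (interior_measure N \<epsilon>)
       (\<lambda>x. ennreal (exp (- hamiltonian N (config N r x)))
            / (\<integral>\<^sup>+ y. ennreal (exp (- hamiltonian N (config N r y))) \<partial>interior_measure N \<epsilon>))"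

text \<open>Rescaled profile h_N: linear interpolation of h_N(k/N) = phi_k / N^2, k = 0..N.\<close>
definition profile :: "nat \<Rightarrow> (int \<Rightarrow> real) \<Rightarrow> real \<Rightarrow> real" where
  "profile N \<phi> t =
     (let k = min (nat \<lfloor>real N * t\<rfloor>) (N - 1)
      in ((real k + 1 - real N * t) * \<phi> (int k) + (real N * t - real k) * \<phi> (int k + 1))
         / real N ^ 2)"

text \<open>C([0,1]) is represented inside the bounded continuous functions on the reals
  by constant extension outside [0,1] (an isometric, closed embedding for the sup norm).\<close>
definition clamp01 :: "real \<Rightarrow> real" where
  "clamp01 t = max 0 (min 1 t)"

definition ereal_ln :: "real \<Rightarrow> ereal" where
  "ereal_ln p = (if p \<le> 0 then - \<infinity> else ereal (ln p))"

end

theory Submission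
  imports Defs "HOL-Complex_Analysis.Great_Picard"
begin

definition Kset :: "real \<Rightarrow> real \<Rightarrow> (real \<Rightarrow>\<^sub>C real) set" where
  "Kset B L = {f. (\<forall>t. apply_bcontfun f t = apply_bcontfun f (clamp01 t)) \<and> (\<forall>t. \<bar>apply_bcontfun f t\<bar> \<le> B)
      \<and> (\<forall>s t. \<bar>apply_bcontfun f s - apply_bcontfun f t\<bar> \<le> L * \<bar>s - t\<bar>)}"

lemma clamp01_in: "clamp01 t \<in> {0..1}" by (auto simp: clamp01_def)
lemma clamp01_id: "t \<in> {0..1} \<Longrightarrow> clamp01 t = t" by (auto simp: clamp01_def)
lemma clamp01_lip: "\<bar>clamp01 s - clamp01 t\<bar> \<le> \<bar>s - t\<bar>" by (auto simp: clamp01_def)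
lemma clamp01_cont: "continuous_on UNIV clamp01"
  unfolding clamp01_def by (intro continuous_intros)

lemma compact_Kset:
  assumes L: "L \<ge> 0"
  shows "compact (Kset B L)"
  unfolding compact_eq_seq_compact_metric seq_compact_def
proof (intro allI impI)
  fix f :: "nat \<Rightarrow> real \<Rightarrow>\<^sub>C real"
  assume fK: "\<forall>n. f n \<in> Kset B L"
  let ?F = "\<lambda>n x. apply_bcontfun (f n) x"
  have bnd: "norm (?F n x) \<le> B" for n x using fK by (auto simp: Kset_def)
  have lip: "\<bar>?F n s - ?F n t\<bar> \<le> L * \<bar>s - t\<bar>" for n s t using fK by (auto simp: Kset_def)
  have fix01: "?F n t = ?F n (clamp01 t)" for n t using fK by (auto simp: Kset_def)
  obtain g k where gc: "continuous_on {0..1} g" and k: "strict_mono (k :: nat \<Rightarrow> nat)"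
    and conv: "\<And>e. 0 < e \<Longrightarrow> \<exists>N. \<forall>n x. n \<ge> N \<and> x \<in> {0..1::real} \<longrightarrow> norm(?F (k n) x - g x) < e"
  proof (rule Arzela_Ascoli[of "{0..1::real}" ?F B])
    show "compact {0..1::real}" by simp
    show "norm (?F n x) \<le> B" for n x by (rule bnd)
    show "\<exists>d>0. \<forall>n y. y \<in> {0..1} \<and> norm (x - y) < d \<longrightarrow> norm (?F n x - ?F n y) < e"
      if "0 < e" for x e
    proof (intro exI[of _ "e / (L + 1)"] conjI allI impI)
      show "0 < e / (L + 1)" using that L by simp
      fix n y assume "y \<in> {0..1} \<and> norm (x - y) < e / (L + 1)"
      then have xy: "\<bar>x - y\<bar> < e / (L+1)" by simp
      have "\<bar>?F n x - ?F n y\<bar> \<le> L * \<bar>x - y\<bar>" by (rule lip)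
      also have "\<dots> \<le> (L+1) * \<bar>x - y\<bar>" using L by (simp add: mult_right_mono)
      also have "\<dots> < e" using xy L by (simp add: field_simps)
      finally show "norm (?F n x - ?F n y) < e" by simp
    qed
  qed blast
  have lim: "(\<lambda>n. ?F (k n) x) \<longlonglongrightarrow> g x" if "x \<in> {0..1}" for x
  proof (rule LIMSEQ_I)
    fix e :: real assume "0 < e"
    from conv[OF this] obtain N where "\<forall>n x. n \<ge> N \<and> x \<in> {0..1::real} \<longrightarrow> norm(?F (k n) x - g x) < e" by blast
    then show "\<exists>N. \<forall>n\<ge>N. norm (?F (k n) x - g x) < e" using that by blast
  qed
  define h where "h t = g (clamp01 t)" for t
  have hb: "\<bar>h t\<bar> \<le> B" for t
  proof -
    have "(\<lambda>n. \<bar>?F (k n) (clamp01 t)\<bar>) \<longlonglongrightarrow> \<bar>g (clamp01 t)\<bar>"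
      by (intro tendsto_intros lim clamp01_in)
    then show ?thesis unfolding h_def
      by (rule LIMSEQ_le_const2) (use bnd in auto)
  qed
  have hl: "\<bar>h s - h t\<bar> \<le> L * \<bar>s - t\<bar>" for s t
  proof -
    have "(\<lambda>n. \<bar>?F (k n) (clamp01 s) - ?F (k n) (clamp01 t)\<bar>) \<longlonglongrightarrow> \<bar>g (clamp01 s) - g (clamp01 t)\<bar>"
      by (intro tendsto_intros lim clamp01_in)
    then have "\<bar>h s - h t\<bar> \<le> L * \<bar>clamp01 s - clamp01 t\<bar>" unfolding h_def
      by (rule LIMSEQ_le_const2) (use lip in auto)
    also have "\<dots> \<le> L * \<bar>s - t\<bar>" using L clamp01_lip by (simp add: mult_left_mono)
    finally show ?thesis .
  qed
  have hcont: "continuous_on UNIV h"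
    unfolding h_def
    by (rule continuous_on_compose2[OF gc clamp01_cont]) (use clamp01_in in auto)
  have hbc: "h \<in> bcontfun" by (rule bcontfun_normI[OF hcont]) (use hb in simp)
  define l where "l = Bcontfun h"
  have lh: "apply_bcontfun l = h" unfolding l_def using hbc by (simp add: Bcontfun_inverse)
  have hcl: "h t = h (clamp01 t)" for t unfolding h_def by (simp add: clamp01_id[OF clamp01_in])
  have "l \<in> Kset B L" unfolding Kset_def mem_Collect_eq lh
    using hb hl hcl by blast
  moreover have "(f \<circ> k) \<longlonglongrightarrow> l"
  proof (rule LIMSEQ_I)
    fix e :: real assume e: "0 < e"
    from conv[of "e/2"] e obtain N where N: "\<forall>n x. n \<ge> N \<and> x \<in> {0..1::real} \<longrightarrow> norm(?F (k n) x - g x) < e/2" by auto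
    show "\<exists>N. \<forall>n\<ge>N. norm ((f \<circ> k) n - l) < e"
    proof (intro exI allI impI)
      fix n assume n: "n \<ge> N"
      have "dist ((f \<circ> k) n) l \<le> e/2"
      proof (rule dist_bound)
        fix x
        have "dist (?F (k n) x) (h x) = norm (?F (k n) (clamp01 x) - g (clamp01 x))"
          using fix01 by (simp add: h_def dist_norm)
        also have "\<dots> < e/2" using N n clamp01_in by blast
        finally show "dist (apply_bcontfun ((f \<circ> k) n) x) (apply_bcontfun l x) \<le> e / 2" by (simp add: lh)
      qed
      then show "norm ((f \<circ> k) n - l) < e" using e by (simp add: dist_norm)
    qed
  qed
  ultimately show "\<exists>l\<in>Kset B L. \<exists>r. strict_mono r \<and> (f \<circ> r) \<longlonglongrightarrow> l" using k by blast
qed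

definition clip :: "real \<Rightarrow> real" where "clip x = max 0 (min 1 x)"

lemma sum_clip_closed:
  fixes \<phi> :: "int \<Rightarrow> real" and x :: real
  assumes N: "N \<ge> 1" and x0: "0 \<le> x" and xN: "x \<le> real N"
  defines "k \<equiv> min (nat \<lfloor>x\<rfloor>) (N - 1)"
  shows "(\<Sum>j<N. (\<phi> (int j + 1) - \<phi> (int j)) * clip (x - real j))
         = \<phi> (int k) - \<phi> 0 + (x - real k) * (\<phi> (int k + 1) - \<phi> (int k))"
proof -
  have kN: "k < N" using N by (simp add: k_def)
  have kx: "real k \<le> x"
  proof -
    have "k \<le> nat \<lfloor>x\<rfloor>" by (simp add: k_def)
    then have "real k \<le> real (nat \<lfloor>x\<rfloor>)" by simp
    also have "\<dots> = of_int \<lfloor>x\<rfloor>" using x0 by simp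
    also have "\<dots> \<le> x" by simp
    finally show ?thesis .
  qed
  have xk1: "x \<le> real k + 1"
  proof (cases "nat \<lfloor>x\<rfloor> \<le> N - 1")
    case True
    then have "k = nat \<lfloor>x\<rfloor>" by (simp add: k_def)
    then show ?thesis using x0 by linarith
  next
    case False
    then have "k = N - 1" by (simp add: k_def)
    then show ?thesis using xN N by (simp add: of_nat_diff)
  qed
  let ?s = "\<lambda>j. \<phi> (int j + 1) - \<phi> (int j)"
  let ?g = "\<lambda>j. ?s j * clip (x - real j)"
  have g0: "?g j = 0" if "j \<in> {..<N} - {..<Suc k}" for j
  proof -
    from that have "real j \<ge> real k + 1" by auto
    then have "clip (x - real j) = 0" using xk1 by (simp add: clip_def)
    then show ?thesis by simp
  qed
  have "(\<Sum>j<N. ?g j) = (\<Sum>j<Suc k. ?g j)"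
    by (rule sum.mono_neutral_right) (use kN g0 in auto)
  also have "\<dots> = (\<Sum>j<k. ?g j) + ?g k" by simp
  also have "(\<Sum>j<k. ?g j) = (\<Sum>j<k. \<phi> (int (Suc j)) - \<phi> (int j))"
  proof (rule sum.cong)
    fix j assume "j \<in> {..<k}"
    then have "real j + 1 \<le> real k" by auto
    then have "clip (x - real j) = 1" using kx by (simp add: clip_def)
    then show "?g j = \<phi> (int (Suc j)) - \<phi> (int j)" by (simp add: add.commute)
  qed simp
  also have "\<dots> = \<phi> (int k) - \<phi> 0"
    using sum_lessThan_telescope[of "\<lambda>n. \<phi> (int n)" k] by simp
  also have "clip (x - real k) = x - real k" using kx xk1 by (simp add: clip_def)
  finally show ?thesis by simp
qed

lemma sum_clip_id:
  assumes N: "N \<ge> 1" and x0: "0 \<le> x" and xN: "x \<le> real N"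
  shows "(\<Sum>j<N. clip (x - real j)) = x"
  using sum_clip_closed[OF assms, of real_of_int] by simp

lemma profile_closed:
  assumes N: "N \<ge> 1" and t: "t \<in> {0..1}"
  shows "profile N \<phi> t = (\<phi> 0 + (\<Sum>j<N. (\<phi> (int j + 1) - \<phi> (int j)) * clip (real N * t - real j))) / real N ^ 2"
proof -
  have x0: "0 \<le> real N * t" and xN: "real N * t \<le> real N" using t by (auto simp: mult_left_le)
  show ?thesis
    unfolding profile_def Let_def sum_clip_closed[OF N x0 xN]
    by (simp add: algebra_simps)
qed

lemma profile_lip:
  fixes \<phi> :: "int \<Rightarrow> real"
  assumes N: "N \<ge> 1" and sl: "\<And>j. j < N \<Longrightarrow> \<bar>\<phi> (int j + 1) - \<phi> (int j)\<bar> \<le> L * real N"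
    and t: "t \<in> {0..1}" and u: "u \<in> {0..1}"
  shows "\<bar>profile N \<phi> t - profile N \<phi> u\<bar> \<le> L * \<bar>t - u\<bar>"
proof -
  have main: "\<bar>profile N \<phi> t - profile N \<phi> u\<bar> \<le> L * (t - u)" if tu: "u \<le> t" "t \<in> {0..1}" "u \<in> {0..1}" for t u
  proof -
    let ?s = "\<lambda>j. \<phi> (int j + 1) - \<phi> (int j)"
    let ?x = "real N * t" and ?y = "real N * u"
    have x0: "0 \<le> ?x" "?x \<le> real N" and y0: "0 \<le> ?y" "?y \<le> real N" using tu by (auto simp: mult_left_le)
    have yx: "?y \<le> ?x" using tu by (simp add: mult_left_mono)
    have mono: "clip (?y - real j) \<le> clip (?x - real j)" for j using yx by (simp add: clip_def)
    have "profile N \<phi> t - profile N \<phi> u = (\<Sum>j<N. ?s j * (clip (?x - real j) - clip (?y - real j))) / real N ^ 2"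
      unfolding profile_closed[OF N tu(2)] profile_closed[OF N tu(3)]
      by (simp add: diff_divide_distrib[symmetric] sum_subtractf[symmetric] algebra_simps)
    also have "\<bar>\<dots>\<bar> = \<bar>\<Sum>j<N. ?s j * (clip (?x - real j) - clip (?y - real j))\<bar> / real N ^ 2"
      by simp
    also have "\<bar>\<Sum>j<N. ?s j * (clip (?x - real j) - clip (?y - real j))\<bar>
        \<le> (\<Sum>j<N. (L * real N) * (clip (?x - real j) - clip (?y - real j)))"
    proof -
      have "\<bar>\<Sum>j<N. ?s j * (clip (?x - real j) - clip (?y - real j))\<bar>
          \<le> (\<Sum>j<N. \<bar>?s j * (clip (?x - real j) - clip (?y - real j))\<bar>)" by (rule sum_abs)
      also have "\<dots> \<le> (\<Sum>j<N. (L * real N) * (clip (?x - real j) - clip (?y - real j)))"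
      proof (rule sum_mono)
        fix j assume "j \<in> {..<N}"
        then have "\<bar>?s j\<bar> \<le> L * real N" using sl by auto
        moreover have "0 \<le> clip (?x - real j) - clip (?y - real j)" using mono[of j] by simp
        ultimately show "\<bar>?s j * (clip (?x - real j) - clip (?y - real j))\<bar> \<le> (L * real N) * (clip (?x - real j) - clip (?y - real j))"
          by (simp add: abs_mult mult_right_mono)
      qed
      finally show ?thesis .
    qed
    also have "(\<Sum>j<N. (L * real N) * (clip (?x - real j) - clip (?y - real j))) = L * real N * (?x - ?y)"
      by (simp add: sum_distrib_left[symmetric] sum_subtractf sum_clip_id[OF N x0] sum_clip_id[OF N y0])
    finally have "\<bar>profile N \<phi> t - profile N \<phi> u\<bar> \<le> L * real N * (?x - ?y) / real N ^ 2"
      by (simp add: divide_right_mono)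
    also have "\<dots> = L * (t - u)" using N by (simp add: power2_eq_square field_simps)
    finally show ?thesis .
  qed
  show ?thesis
  proof (cases "u \<le> t")
    case True then show ?thesis using main[OF True t u] by simp
  next
    case False then show ?thesis using main[of t u] t u by (simp add: abs_minus_commute)
  qed
qed

lemma sum_int_range: "(\<Sum>i\<in>{0..int N}. f i) = (\<Sum>i\<le>N. f (int i))"
proof -
  have "{0..int N} = int ` {..N}" by (simp add: image_int_atLeastAtMost atLeast0AtMost[symmetric])
  then show ?thesis by (simp add: sum.reindex)
qed

lemma slope_bound:
  fixes x :: "int \<Rightarrow> real"
  assumes N: "N \<ge> 1" and r: "r = (a, \<alpha>, b, \<beta>)"
    and H: "hamiltonian N (config N r x) \<le> c * real N"
    and j: "j < N"
  shows "\<bar>config N r x (int j + 1) - config N r x (int j)\<bar> \<le> (\<bar>\<alpha>\<bar> + c + 1) * real N"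
proof -
  let ?\<phi> = "config N r x"
  define D where "D i = ?\<phi> (int i + 1) + ?\<phi> (int i - 1) - 2 * ?\<phi> (int i)" for i :: nat
  have m1: "?\<phi> (-1) = a * real N ^ 2 - \<alpha> * real N" using r by (simp add: config_def)
  have z0: "?\<phi> 0 = a * real N ^ 2" using r N by (simp add: config_def)
  have s: "?\<phi> (int j + 1) - ?\<phi> (int j) = \<alpha> * real N + (\<Sum>i\<le>j. D i)" for j
  proof (induction j)
    case 0 then show ?case using m1 z0 by (simp add: D_def)
  next
    case (Suc j)
    have e1: "int (Suc j) = int j + 1" by simp
    have e2: "int j + 1 - 1 = int j" by simp
    have "D (Suc j) = ?\<phi> (int j + 1 + 1) + ?\<phi> (int j + 1 - 1) - 2 * ?\<phi> (int j + 1)"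
      by (simp only: D_def e1)
    then have "D (Suc j) = ?\<phi> (int j + 1 + 1) + ?\<phi> (int j) - 2 * ?\<phi> (int j + 1)"
      by (simp only: e2)
    then show ?case using Suc unfolding e1 sum.atMost_Suc by linarith
  qed
  have Hs: "hamiltonian N ?\<phi> = (\<Sum>i\<le>N. (D i)^2 / 2)"
    unfolding hamiltonian_def sum_int_range D_def by simp
  have "\<bar>\<Sum>i\<le>j. D i\<bar> \<le> (\<Sum>i\<le>j. \<bar>D i\<bar>)" by (rule sum_abs)
  also have "\<dots> \<le> (\<Sum>i\<le>N. \<bar>D i\<bar>)" by (rule sum_mono2) (use j in auto)
  also have "\<dots> \<le> (\<Sum>i\<le>N. (D i)^2 / 2 + 1/2)"
  proof (rule sum_mono)
    fix i
    have "0 \<le> (\<bar>D i\<bar> - 1)^2" by simp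
    then show "\<bar>D i\<bar> \<le> (D i)^2 / 2 + 1/2" by (simp add: power2_eq_square algebra_simps)
  qed
  also have "\<dots> = hamiltonian N ?\<phi> + (real N + 1) / 2" by (simp add: Hs sum.distrib)
  also have "\<dots> \<le> c * real N + real N"
  proof -
    have "(real N + 1) / 2 \<le> real N" using N by simp
    then show ?thesis using H by linarith
  qed
  finally have "\<bar>\<Sum>i\<le>j. D i\<bar> \<le> c * real N + real N" .
  then have "\<bar>?\<phi> (int j + 1) - ?\<phi> (int j)\<bar> \<le> \<bar>\<alpha>\<bar> * real N + (c * real N + real N)"
  proof -
    have "\<bar>\<alpha> * real N + (\<Sum>i\<le>j. D i)\<bar> \<le> \<bar>\<alpha> * real N\<bar> + \<bar>\<Sum>i\<le>j. D i\<bar>" by (rule abs_triangle_ineq)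
    moreover have "\<bar>\<alpha> * real N\<bar> = \<bar>\<alpha>\<bar> * real N" by (simp add: abs_mult)
    ultimately show ?thesis unfolding s using \<open>\<bar>\<Sum>i\<le>j. D i\<bar> \<le> c * real N + real N\<close> by linarith
  qed
  then show ?thesis by (simp add: algebra_simps)
qed

lemma profile_at0:
  assumes N: "N \<ge> 1" shows "profile N \<phi> 0 = \<phi> 0 / real N ^ 2"
proof -
  have "clip (real N * 0 - real j) = 0" for j by (simp add: clip_def)
  then show ?thesis using profile_closed[OF N, of 0 \<phi>] by simp
qed

lemma profile_in_K:
  fixes x :: "int \<Rightarrow> real"
  assumes N: "N \<ge> 1" and r: "r = (a, \<alpha>, b, \<beta>)"
    and H: "hamiltonian N (config N r x) \<le> c * real N" and c: "c \<ge> 0"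
  shows "(\<lambda>t. profile N (config N r x) (clamp01 t)) \<in> apply_bcontfun ` Kset (\<bar>a\<bar> + (\<bar>\<alpha>\<bar> + c + 1)) (\<bar>\<alpha>\<bar> + c + 1)"
proof -
  define L where "L = \<bar>\<alpha>\<bar> + c + 1"
  have L0: "L \<ge> 0" using c by (simp add: L_def)
  let ?p = "profile N (config N r x)"
  define g where "g t = ?p (clamp01 t)" for t
  have plip: "\<bar>?p t - ?p u\<bar> \<le> L * \<bar>t - u\<bar>" if "t \<in> {0..1}" "u \<in> {0..1}" for t u
    by (rule profile_lip[OF N _ that]) (use slope_bound[OF N r H] in \<open>simp add: L_def\<close>)
  have glip: "\<bar>g s - g t\<bar> \<le> L * \<bar>s - t\<bar>" for s t
  proof -
    have "\<bar>g s - g t\<bar> \<le> L * \<bar>clamp01 s - clamp01 t\<bar>" unfolding g_def by (rule plip) (rule clamp01_in)+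
    also have "\<dots> \<le> L * \<bar>s - t\<bar>" using L0 clamp01_lip by (simp add: mult_left_mono)
    finally show ?thesis .
  qed
  have p0: "?p 0 = a" using profile_at0[OF N] N r by (simp add: config_def)
  have g0: "g 0 = a" by (simp add: g_def clamp01_def p0)
  have gb: "\<bar>g t\<bar> \<le> \<bar>a\<bar> + L" for t
  proof -
    have "\<bar>g t - g 0\<bar> \<le> L * \<bar>clamp01 t - clamp01 0\<bar>" unfolding g_def by (rule plip) (rule clamp01_in)+
    also have "\<dots> \<le> L * 1" using L0 by (intro mult_left_mono) (auto simp: clamp01_def)
    finally show ?thesis using g0 by linarith
  qed
  have gcl: "g t = g (clamp01 t)" for t unfolding g_def by (simp add: clamp01_id[OF clamp01_in])
  have gcont: "continuous_on UNIV g"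
  proof (rule lipschitz_on_continuous_on)
    show "L-lipschitz_on UNIV g" by (rule lipschitz_onI) (use glip L0 in \<open>auto simp: dist_real_def\<close>)
  qed
  have gbc: "g \<in> bcontfun" by (rule bcontfun_normI[OF gcont]) (use gb in simp)
  have ag: "apply_bcontfun (Bcontfun g) = g" using gbc by (simp add: Bcontfun_inverse)
  have "Bcontfun g \<in> Kset (\<bar>a\<bar> + L) L" unfolding Kset_def mem_Collect_eq ag using gcl gb glip by blast
  then have "g \<in> apply_bcontfun ` Kset (\<bar>a\<bar> + L) L" using ag by (metis image_eqI)
  then show ?thesis unfolding L_def g_def by simp
qed

lemma ref_ca: "countably_additive (sets borel) (\<lambda>A. ennreal \<epsilon> * indicator A (0::real) + emeasure lborel A)"
proof (rule countably_additiveI)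
  fix A :: "nat \<Rightarrow> real set" assume A: "range A \<subseteq> sets borel" "disjoint_family A"
  have "(\<Sum>i. ennreal \<epsilon> * indicator (A i) 0 + emeasure lborel (A i))
      = (\<Sum>i. ennreal \<epsilon> * indicator (A i) 0) + (\<Sum>i. emeasure lborel (A i))"
    by (rule suminf_add[symmetric]) auto
  also have "(\<Sum>i. ennreal \<epsilon> * indicator (A i) 0) = ennreal \<epsilon> * indicator (\<Union>i. A i) 0"
    unfolding ennreal_suminf_cmult suminf_indicator[OF A(2)] ..
  also have "(\<Sum>i. emeasure lborel (A i)) = emeasure lborel (\<Union>i. A i)"
    using A by (intro suminf_emeasure) (auto simp: image_subset_iff)
  finally show "(\<Sum>i. ennreal \<epsilon> * indicator (A i) 0 + emeasure lborel (A i)) =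
     ennreal \<epsilon> * indicator (\<Union>i. A i) 0 + emeasure lborel (\<Union>i. A i)" .
qed

lemma sets_ref[simp]: "sets (ref_measure \<epsilon>) = sets borel"
  unfolding ref_measure_def by (metis sets_measure_of sets.sigma_sets_eq space_borel sets.space_closed)

lemma space_ref[simp]: "space (ref_measure \<epsilon>) = UNIV"
  unfolding ref_measure_def by (simp add: space_measure_of_conv)

lemma emeasure_ref:
  assumes "A \<in> sets borel"
  shows "emeasure (ref_measure \<epsilon>) A = ennreal \<epsilon> * indicator A 0 + emeasure lborel A"
  unfolding ref_measure_def
proof (rule emeasure_measure_of_sigma[OF _ _ ref_ca assms])
  show "sigma_algebra UNIV (sets borel)" using sets.sigma_algebra_axioms[of borel] by simp
  show "positive (sets borel) (\<lambda>A. ennreal \<epsilon> * indicator A (0::real) + emeasure lborel A)"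
    by (simp add: positive_def)
qed

lemma measurable_ref_iff[simp]: "measurable (ref_measure \<epsilon>) N = measurable borel N"
  by (rule measurable_cong_sets) auto

lemma emeasure_ref_interval_fin: "emeasure (ref_measure \<epsilon>) {- real n..real n} \<noteq> \<infinity>"
proof -
  have "emeasure (ref_measure \<epsilon>) {- real n..real n} = ennreal \<epsilon> * indicator {- real n..real n} 0 + emeasure lborel {- real n..real n}"
    by (rule emeasure_ref) simp
  also have "\<dots> = ennreal \<epsilon> * indicator {- real n..real n} (0::real) + ennreal (2 * real n)" by simp
  also have "\<dots> < \<infinity>" by (simp add: ennreal_mult_less_top indicator_def)
  finally show ?thesis by simp
qed

lemma sigma_finite_ref: "sigma_finite_measure (ref_measure \<epsilon>)"
proof
  let ?A = "range (\<lambda>n::nat. {- real n..real n})"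
  have c: "countable ?A" by simp
  have s: "?A \<subseteq> sets (ref_measure \<epsilon>)" unfolding sets_ref by (simp add: image_subset_iff)
  have u: "\<Union> ?A = space (ref_measure \<epsilon>)"
  proof (rule set_eqI, rule iffI)
    fix y :: real assume "y \<in> space (ref_measure \<epsilon>)"
    obtain n :: nat where "\<bar>y\<bar> \<le> real n" using real_arch_simple by blast
    then have "y \<in> {- real n..real n}" by auto
    then show "y \<in> \<Union> ?A" by blast
  qed simp
  have f: "\<forall>a\<in>?A. emeasure (ref_measure \<epsilon>) a \<noteq> \<infinity>"
    using emeasure_ref_interval_fin by blast
  show "\<exists>A. countable A \<and> A \<subseteq> sets (ref_measure \<epsilon>) \<and> \<Union> A = space (ref_measure \<epsilon>) \<and> (\<forall>a\<in>A. emeasure (ref_measure \<epsilon>) a \<noteq> \<infinity>)"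
    using c s u f by blast
qed

lemma nn_integral_ref:
  assumes f: "f \<in> borel_measurable borel"
  shows "(\<integral>\<^sup>+ y. f y \<partial>ref_measure \<epsilon>) = ennreal \<epsilon> * f 0 + (\<integral>\<^sup>+ y. f y \<partial>lborel)"
  using f
proof (induct rule: borel_measurable_induct)
  case (cong f g)
  have "(\<integral>\<^sup>+ y. f y \<partial>ref_measure \<epsilon>) = (\<integral>\<^sup>+ y. g y \<partial>ref_measure \<epsilon>)"
    by (rule nn_integral_cong) (use cong in simp)
  moreover have "(\<integral>\<^sup>+ y. f y \<partial>lborel) = (\<integral>\<^sup>+ y. g y \<partial>lborel)"
    by (rule nn_integral_cong) (use cong in simp)
  ultimately show ?case using cong by simp
next
  case (set A)
  then show ?case by (simp add: emeasure_ref)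
next
  case (mult u c)
  have "(\<integral>\<^sup>+ y. c * u y \<partial>ref_measure \<epsilon>) = c * (\<integral>\<^sup>+ y. u y \<partial>ref_measure \<epsilon>)"
    by (rule nn_integral_cmult) (use mult in simp)
  moreover have "(\<integral>\<^sup>+ y. c * u y \<partial>lborel) = c * (\<integral>\<^sup>+ y. u y \<partial>lborel)"
    by (rule nn_integral_cmult) (use mult in simp)
  ultimately show ?case using mult by (simp add: algebra_simps)
next
  case (add u v)
  have "(\<integral>\<^sup>+ y. v y + u y \<partial>ref_measure \<epsilon>) = (\<integral>\<^sup>+ y. v y \<partial>ref_measure \<epsilon>) + (\<integral>\<^sup>+ y. u y \<partial>ref_measure \<epsilon>)"
    by (rule nn_integral_add) (use add in simp_all)
  moreover have "(\<integral>\<^sup>+ y. v y + u y \<partial>lborel) = (\<integral>\<^sup>+ y. v y \<partial>lborel) + (\<integral>\<^sup>+ y. u y \<partial>lborel)"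
    by (rule nn_integral_add) (use add in simp_all)
  ultimately show ?case using add by (simp add: algebra_simps)
next
  case (seq U)
  have 1: "(\<integral>\<^sup>+ y. (SUP i. U i) y \<partial>ref_measure \<epsilon>) = (SUP i. (\<integral>\<^sup>+ y. U i y \<partial>ref_measure \<epsilon>))"
    unfolding SUP_apply by (rule nn_integral_monotone_convergence_SUP) (use seq in simp_all)
  have 2: "(SUP i. (\<integral>\<^sup>+ y. U i y \<partial>ref_measure \<epsilon>)) = (SUP i. ennreal \<epsilon> * U i 0 + (\<integral>\<^sup>+ y. U i y \<partial>lborel))" using seq by simp
  have 3: "(SUP i. ennreal \<epsilon> * U i 0 + (\<integral>\<^sup>+ y. U i y \<partial>lborel)) = (SUP i. ennreal \<epsilon> * U i 0) + (SUP i. (\<integral>\<^sup>+ y. U i y \<partial>lborel))"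
  proof (rule ennreal_SUP_add)
    have le: "U m y \<le> U n y" if "m \<le> n" for m n y
      using seq(4) that unfolding incseq_def le_fun_def by blast
    show "incseq (\<lambda>i. ennreal \<epsilon> * U i 0)" unfolding incseq_def
      by (intro allI impI mult_left_mono le) simp_all
    show "incseq (\<lambda>i. \<integral>\<^sup>+ y. U i y \<partial>lborel)" unfolding incseq_def
      by (intro allI impI nn_integral_mono le)
  qed
  have 4: "(SUP i. ennreal \<epsilon> * U i 0) = ennreal \<epsilon> * (SUP i. U i 0)"
    by (rule SUP_mult_left_ennreal[symmetric])
  have 5: "(SUP i. (\<integral>\<^sup>+ y. U i y \<partial>lborel)) = (\<integral>\<^sup>+ y. (SUP i. U i) y \<partial>lborel)"
    unfolding SUP_apply by (rule nn_integral_monotone_convergence_SUP[symmetric]) (use seq in simp_all)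
  have 6: "(SUP i. U i) 0 = (SUP i. U i 0)" by (simp only: SUP_apply)
  show ?case unfolding 1 2 3 4 5 6 ..
qed

lemma gauss_lborel: "(\<integral>\<^sup>+ y. ennreal (exp (- (y + c)\<^sup>2 / 4)) \<partial>lborel) = ennreal (sqrt (4 * pi))"
proof -
  have e: "exp (- (y + c)\<^sup>2 / 4) = sqrt (4 * pi) * normal_density (-c) (sqrt 2) y" for y
    by (simp add: normal_density_def real_sqrt_mult)
  have "(\<integral>\<^sup>+ y. ennreal (exp (- (y + c)\<^sup>2 / 4)) \<partial>lborel) = (\<integral>\<^sup>+ y. ennreal (sqrt (4 * pi)) * ennreal (normal_density (-c) (sqrt 2) y) \<partial>lborel)"
    unfolding e by (simp add: ennreal_mult)
  also have "\<dots> = ennreal (sqrt (4 * pi)) * (\<integral>\<^sup>+ y. ennreal (normal_density (-c) (sqrt 2) y) \<partial>lborel)"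
    by (rule nn_integral_cmult) simp
  also have "(\<integral>\<^sup>+ y. ennreal (normal_density (-c) (sqrt 2) y) \<partial>lborel) = 1"
    by (subst nn_integral_eq_integral) auto
  finally show ?thesis by simp
qed

lemma gauss_ref:
  assumes eps: "\<epsilon> \<ge> 0"
  shows "(\<integral>\<^sup>+ y. ennreal (exp (- (y + c)\<^sup>2 / 4)) \<partial>ref_measure \<epsilon>) \<le> ennreal (\<epsilon> + sqrt (4 * pi))"
proof -
  have "(\<integral>\<^sup>+ y. ennreal (exp (- (y + c)\<^sup>2 / 4)) \<partial>ref_measure \<epsilon>) = ennreal \<epsilon> * ennreal (exp (- (0 + c)\<^sup>2 / 4)) + ennreal (sqrt (4 * pi))"
    by (rule nn_integral_ref[THEN trans]) (simp_all only: gauss_lborel, simp)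
  also have "\<dots> \<le> ennreal \<epsilon> * 1 + ennreal (sqrt (4 * pi))"
    by (intro add_mono mult_left_mono) auto
  also have "\<dots> = ennreal (\<epsilon> + sqrt (4 * pi))" using eps by (simp add: ennreal_plus)
  finally show ?thesis .
qed

lemma comp_meas[measurable]: "(\<lambda>x. x j) \<in> borel_measurable (PiM I (\<lambda>_. ref_measure \<epsilon>))"
proof (cases "j \<in> I")
  case True
  have "(\<lambda>x. x j) \<in> PiM I (\<lambda>_. ref_measure \<epsilon>) \<rightarrow>\<^sub>M ref_measure \<epsilon>"
    by (rule measurable_component_singleton[OF True])
  moreover have "PiM I (\<lambda>_. ref_measure \<epsilon>) \<rightarrow>\<^sub>M ref_measure \<epsilon> = PiM I (\<lambda>_. ref_measure \<epsilon>) \<rightarrow>\<^sub>M borel"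
    by (rule measurable_cong_sets) simp_all
  ultimately show ?thesis by simp
next
  case False
  have *: "\<forall>x\<in>space (PiM I (\<lambda>_. ref_measure \<epsilon>)). x j = undefined"
    using False by (auto simp: space_PiM PiE_def extensional_def)
  have "(\<lambda>x. x j) \<in> borel_measurable (PiM I (\<lambda>_. ref_measure \<epsilon>)) \<longleftrightarrow> (\<lambda>x. undefined::real) \<in> borel_measurable (PiM I (\<lambda>_. ref_measure \<epsilon>))"
    by (rule measurable_cong) (use * in blast)
  then show ?thesis by simp
qed

definition wx :: "real \<Rightarrow> real \<Rightarrow> (int \<Rightarrow> real) \<Rightarrow> int \<Rightarrow> real" where
  "wx A1 A0 x j = (if j = -1 then A1 else if j = 0 then A0 else x j)"

definition Dw :: "real \<Rightarrow> real \<Rightarrow> (int \<Rightarrow> real) \<Rightarrow> int \<Rightarrow> real" where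
  "Dw A1 A0 x k = wx A1 A0 x (k+1) + wx A1 A0 x (k-1) - 2 * wx A1 A0 x k"

definition Gm :: "real \<Rightarrow> real \<Rightarrow> nat \<Rightarrow> (int \<Rightarrow> real) \<Rightarrow> real" where
  "Gm A1 A0 m x = (\<Prod>k<m. exp (- (Dw A1 A0 x (int k))\<^sup>2 / 4))"

lemma wx_meas[measurable]: "(\<lambda>x. wx A1 A0 x j) \<in> borel_measurable (PiM I (\<lambda>_. ref_measure \<epsilon>))"
proof -
  consider "j = -1" | "j = 0" | "j \<noteq> -1" "j \<noteq> 0" by blast
  then show ?thesis
  proof cases
    case 1 then show ?thesis unfolding wx_def by simp
  next
    case 2 then show ?thesis unfolding wx_def by simp
  next
    case 3 then show ?thesis unfolding wx_def using comp_meas[of j I \<epsilon>] by simp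
  qed
qed

lemma Dw_meas[measurable]: "(\<lambda>x. Dw A1 A0 x k) \<in> borel_measurable (PiM I (\<lambda>_. ref_measure \<epsilon>))"
  unfolding Dw_def by (intro borel_measurable_add borel_measurable_diff borel_measurable_times wx_meas) simp_all

lemma Gm_meas[measurable]: "(\<lambda>x. Gm A1 A0 m x) \<in> borel_measurable (PiM I (\<lambda>_. ref_measure \<epsilon>))"
  unfolding Gm_def by (intro borel_measurable_prod) measurable

lemma Gm_upd:
  assumes "j = int m + 1"
  shows "Gm A1 A0 (Suc m) (x(j := y)) = Gm A1 A0 m x * exp (- (y + (wx A1 A0 x (int m - 1) - 2 * wx A1 A0 x (int m)))\<^sup>2 / 4)"
proof -
  have w: "wx A1 A0 (x(j := y)) i = wx A1 A0 x i" if "i \<le> int m" for i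
    using that assms by (auto simp: wx_def)
  have wj: "wx A1 A0 (x(j := y)) j = y" using assms by (simp add: wx_def)
  have "Gm A1 A0 m (x(j := y)) = Gm A1 A0 m x"
    unfolding Gm_def Dw_def by (rule prod.cong) (auto simp: w)
  moreover have "Dw A1 A0 (x(j := y)) (int m) = y + (wx A1 A0 x (int m - 1) - 2 * wx A1 A0 x (int m))"
  proof -
    have a: "wx A1 A0 (x(j := y)) (int m - 1) = wx A1 A0 x (int m - 1)" by (rule w) simp
    have b: "wx A1 A0 (x(j := y)) (int m) = wx A1 A0 x (int m)" by (rule w) simp
    show ?thesis unfolding Dw_def using wj a b assms by simp
  qed
  ultimately show ?thesis unfolding Gm_def by simp
qed

lemma Gm_bound:
  assumes eps: "\<epsilon> \<ge> 0"
  shows "(\<integral>\<^sup>+ x. ennreal (Gm A1 A0 m x) \<partial>PiM {1..int m} (\<lambda>_. ref_measure \<epsilon>)) \<le> ennreal (\<epsilon> + sqrt (4 * pi)) ^ m"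
proof (induction m)
  case 0
  have "(\<integral>\<^sup>+ x. ennreal (Gm A1 A0 0 x) \<partial>PiM {1..int 0} (\<lambda>_. ref_measure \<epsilon>)) = (\<integral>\<^sup>+ x. 1 \<partial>count_space {\<lambda>_::int. undefined::real})"
    by (simp add: Gm_def PiM_empty)
  also have "\<dots> = 1" by (simp add: nn_integral_count_space_finite)
  finally show ?case by simp
next
  case (Suc m)
  interpret P: product_sigma_finite "\<lambda>_::int. ref_measure \<epsilon>"
    by (simp add: product_sigma_finite_def sigma_finite_ref)
  let ?i = "int m + 1"
  let ?G = "ennreal (\<epsilon> + sqrt (4 * pi))"
  have ins: "{1..int (Suc m)} = insert ?i {1..int m}" by auto
  have "(\<integral>\<^sup>+ x. ennreal (Gm A1 A0 (Suc m) x) \<partial>PiM {1..int (Suc m)} (\<lambda>_. ref_measure \<epsilon>))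
      = (\<integral>\<^sup>+ x. (\<integral>\<^sup>+ y. ennreal (Gm A1 A0 (Suc m) (x(?i := y))) \<partial>ref_measure \<epsilon>) \<partial>PiM {1..int m} (\<lambda>_. ref_measure \<epsilon>))"
    unfolding ins by (rule P.product_nn_integral_insert) auto
  also have "\<dots> \<le> (\<integral>\<^sup>+ x. ennreal (Gm A1 A0 m x) * ?G \<partial>PiM {1..int m} (\<lambda>_. ref_measure \<epsilon>))"
  proof (rule nn_integral_mono)
    fix x
    have "(\<integral>\<^sup>+ y. ennreal (Gm A1 A0 (Suc m) (x(?i := y))) \<partial>ref_measure \<epsilon>)
        = (\<integral>\<^sup>+ y. ennreal (Gm A1 A0 m x) * ennreal (exp (- (y + (wx A1 A0 x (int m - 1) - 2 * wx A1 A0 x (int m)))\<^sup>2 / 4)) \<partial>ref_measure \<epsilon>)"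
    proof (rule nn_integral_cong)
      fix y
      have nn: "0 \<le> Gm A1 A0 m x" by (simp add: Gm_def prod_nonneg)
      show "ennreal (Gm A1 A0 (Suc m) (x(?i := y))) = ennreal (Gm A1 A0 m x) * ennreal (exp (- (y + (wx A1 A0 x (int m - 1) - 2 * wx A1 A0 x (int m)))\<^sup>2 / 4))"
        by (simp only: Gm_upd[OF refl] ennreal_mult[OF nn exp_ge_zero])
    qed
    also have "\<dots> = ennreal (Gm A1 A0 m x) * (\<integral>\<^sup>+ y. ennreal (exp (- (y + (wx A1 A0 x (int m - 1) - 2 * wx A1 A0 x (int m)))\<^sup>2 / 4)) \<partial>ref_measure \<epsilon>)"
      by (rule nn_integral_cmult) simp
    also have "\<dots> \<le> ennreal (Gm A1 A0 m x) * ?G"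
      by (intro mult_left_mono gauss_ref eps) simp
    finally show "(\<integral>\<^sup>+ y. ennreal (Gm A1 A0 (Suc m) (x(?i := y))) \<partial>ref_measure \<epsilon>) \<le> ennreal (Gm A1 A0 m x) * ?G" .
  qed
  also have "\<dots> = (\<integral>\<^sup>+ x. ennreal (Gm A1 A0 m x) \<partial>PiM {1..int m} (\<lambda>_. ref_measure \<epsilon>)) * ?G"
    by (rule nn_integral_multc) simp
  also have "\<dots> \<le> ?G ^ m * ?G" by (intro mult_right_mono Suc.IH) simp
  finally show ?case by (simp add: mult.commute)
qed

lemma config_meas[measurable]: "(\<lambda>x. config N r x k) \<in> borel_measurable (PiM I (\<lambda>_. ref_measure \<epsilon>))"
proof (cases "k \<in> {-1, 0, int N, int N + 1}")
  case True
  have "(\<lambda>x. config N r x k) = (\<lambda>x. config N r (\<lambda>_. 0) k)"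
    using True by (auto simp: config_def split: prod.splits)
  then show ?thesis by simp
next
  case False
  have "(\<lambda>x. config N r x k) = (\<lambda>x. x k)"
    using False by (auto simp: config_def split: prod.splits)
  then show ?thesis using comp_meas by simp
qed

lemma ham_meas[measurable]: "(\<lambda>x. hamiltonian N (config N r x)) \<in> borel_measurable (PiM I (\<lambda>_. ref_measure \<epsilon>))"
  unfolding hamiltonian_def by (intro borel_measurable_sum) measurable

lemma ham_nonneg: "hamiltonian N \<phi> \<ge> 0"
  unfolding hamiltonian_def by (intro sum_nonneg) simp

lemma ham_Gm:
  assumes N: "N \<ge> 2" and r: "r = (a, \<alpha>, b, \<beta>)"
  shows "exp (- hamiltonian N (config N r x) / 2) \<le> Gm (a * real N ^ 2 - \<alpha> * real N) (a * real N ^ 2) (N - 1) x"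
proof -
  let ?A1 = "a * real N ^ 2 - \<alpha> * real N" and ?A0 = "a * real N ^ 2"
  let ?\<phi> = "config N r x"
  have cw: "?\<phi> j = wx ?A1 ?A0 x j" if "j \<le> int N - 1" for j
    using that r by (auto simp: config_def wx_def)
  have D: "(?\<phi> (int k + 1) + ?\<phi> (int k - 1) - 2 * ?\<phi> (int k)) = Dw ?A1 ?A0 x (int k)" if "k < N - 1" for k
    using that by (simp add: Dw_def cw)
  have "(\<Sum>k<N - 1. (Dw ?A1 ?A0 x (int k))\<^sup>2 / 4) = (\<Sum>k\<in>int ` {..<N - 1}. (?\<phi> (k + 1) + ?\<phi> (k - 1) - 2 * ?\<phi> k)\<^sup>2 / 4)"
    by (simp add: sum.reindex D)
  also have "\<dots> \<le> (\<Sum>k\<in>{0..int N}. (?\<phi> (k + 1) + ?\<phi> (k - 1) - 2 * ?\<phi> k)\<^sup>2 / 4)"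
    by (rule sum_mono2) auto
  also have "\<dots> = hamiltonian N ?\<phi> / 2"
    unfolding hamiltonian_def by (simp add: sum_divide_distrib)
  finally have le: "(\<Sum>k<N - 1. (Dw ?A1 ?A0 x (int k))\<^sup>2 / 4) \<le> hamiltonian N ?\<phi> / 2" .
  have "exp (- hamiltonian N ?\<phi> / 2) \<le> exp (- (\<Sum>k<N - 1. (Dw ?A1 ?A0 x (int k))\<^sup>2 / 4))"
    using le by simp
  also have "\<dots> = Gm ?A1 ?A0 (N - 1) x"
    unfolding Gm_def by (simp add: exp_sum[symmetric] sum_negf)
  finally show ?thesis .
qed

lemma Zhalf_bound:
  assumes N: "N \<ge> 2" and eps: "\<epsilon> \<ge> 0"
  shows "(\<integral>\<^sup>+ x. ennreal (exp (- hamiltonian N (config N r x) / 2)) \<partial>interior_measure N \<epsilon>) \<le> ennreal (\<epsilon> + sqrt (4 * pi)) ^ (N - 1)"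
proof -
  obtain a \<alpha> b \<beta> where r: "r = (a, \<alpha>, b, \<beta>)" by (cases r) auto
  have I: "{1..int N - 1} = {1..int (N - 1)}" using N by simp
  have "(\<integral>\<^sup>+ x. ennreal (exp (- hamiltonian N (config N r x) / 2)) \<partial>interior_measure N \<epsilon>)
      \<le> (\<integral>\<^sup>+ x. ennreal (Gm (a * real N ^ 2 - \<alpha> * real N) (a * real N ^ 2) (N - 1) x) \<partial>PiM {1..int (N - 1)} (\<lambda>_. ref_measure \<epsilon>))"
    unfolding interior_measure_def I
    by (intro nn_integral_mono ennreal_leI ham_Gm[OF N r])
  also have "\<dots> \<le> ennreal (\<epsilon> + sqrt (4 * pi)) ^ (N - 1)" by (rule Gm_bound[OF eps])
  finally show ?thesis .
qed

definition cc2 :: "real \<times> real \<times> real \<times> real \<Rightarrow> real" where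
  "cc2 r = (case r of (a, \<alpha>, b, \<beta>) \<Rightarrow> 3 * (b - a) - 2 * \<alpha> - \<beta>)"
definition cc3 :: "real \<times> real \<times> real \<times> real \<Rightarrow> real" where
  "cc3 r = (case r of (a, \<alpha>, b, \<beta>) \<Rightarrow> 2 * (a - b) + \<alpha> + \<beta>)"

definition Qf :: "nat \<Rightarrow> real \<times> real \<times> real \<times> real \<Rightarrow> int \<Rightarrow> real" where
  "Qf N r k = (case r of (a, \<alpha>, b, \<beta>) \<Rightarrow>
      a * real N ^ 2 + \<alpha> * real N * of_int k + cc2 r * (of_int k)^2 + cc3 r * (of_int k)^3 / real N)"

definition EE :: "real \<times> real \<times> real \<times> real \<Rightarrow> real" where
  "EE r = 1 + \<bar>cc2 r\<bar> + 4 * \<bar>cc3 r\<bar>"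

definition C0 :: "real \<times> real \<times> real \<times> real \<Rightarrow> real" where
  "C0 r = 2 * \<bar>cc2 r\<bar> + 6 * \<bar>cc3 r\<bar> + 4 * EE r"

lemma abs_tri2:
  fixes u v w :: real assumes "w \<ge> 0" shows "\<bar>u + v * w\<bar> \<le> \<bar>u\<bar> + \<bar>v\<bar> * w"
proof -
  have "\<bar>v * w\<bar> = \<bar>v\<bar> * w" using assms by (simp add: abs_mult)
  then show ?thesis using abs_triangle_ineq[of u "v * w"] by simp
qed

lemma DQ:
  assumes N: "N \<ge> 1"
  shows "Qf N r (k + 1) + Qf N r (k - 1) - 2 * Qf N r k = 2 * cc2 r + 6 * cc3 r * of_int k / real N"
  using N by (cases r) (simp add: Qf_def field_simps power2_eq_square power3_eq_cube)

lemma config_Q: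
  fixes x :: "int \<Rightarrow> real"
  assumes N: "N \<ge> 1" and box: "\<And>k. k \<in> {1..int N - 1} \<Longrightarrow> \<bar>x k - Qf N r k\<bar> \<le> 1"
    and k: "-1 \<le> k" "k \<le> int N + 1"
  shows "\<bar>config N r x k - Qf N r k\<bar> \<le> EE r"
proof -
  obtain a \<alpha> b \<beta> where r: "r = (a, \<alpha>, b, \<beta>)" by (cases r) auto
  let ?c2 = "cc2 r" and ?c3 = "cc3 r"
  have Npos: "real N > 0" using N by simp
  have inv: "1 / real N \<le> 1" using N by simp
  have E1: "1 \<le> EE r" and E2: "\<bar>?c2\<bar> + \<bar>?c3\<bar> \<le> EE r" and E3: "\<bar>?c2\<bar> + 4 * \<bar>?c3\<bar> \<le> EE r"
    by (auto simp: EE_def)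
  consider "k = -1" | "k = 0" | "k = int N" | "k = int N + 1" | "k \<in> {1..int N - 1}"
    using k by force
  then show ?thesis
  proof cases
    case 1
    have "config N r x k - Qf N r k = - ?c2 + ?c3 * (1 / real N)"
      using 1 r Npos by (simp add: config_def Qf_def field_simps power2_eq_square power3_eq_cube)
    also have "\<bar>\<dots>\<bar> \<le> \<bar>- ?c2\<bar> + \<bar>?c3\<bar> * (1 / real N)" by (rule abs_tri2) simp
    also have "\<dots> \<le> \<bar>?c2\<bar> + \<bar>?c3\<bar>" using mult_left_mono[OF inv, of "\<bar>?c3\<bar>"] by simp
    finally show ?thesis using E2 by linarith
  next
    case 2
    then show ?thesis using r E1 N by (simp add: config_def Qf_def)
  next
    case 3
    have "config N r x k - Qf N r k = 0"
      using 3 r Npos N by (simp add: config_def Qf_def cc2_def cc3_def field_simps power2_eq_square power3_eq_cube)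
    then show ?thesis using E1 by simp
  next
    case 4
    have "config N r x k - Qf N r k = - (?c2 + 3 * ?c3) - ?c3 * (1 / real N)"
      using 4 r Npos N by (simp add: config_def Qf_def cc2_def cc3_def field_simps power2_eq_square power3_eq_cube)
    also have "\<dots> = - (?c2 + 3 * ?c3) + (- ?c3) * (1 / real N)" by simp
    also have "\<bar>\<dots>\<bar> \<le> \<bar>- (?c2 + 3 * ?c3)\<bar> + \<bar>- ?c3\<bar> * (1 / real N)" by (rule abs_tri2) simp
    also have "\<dots> \<le> \<bar>?c2\<bar> + 3 * \<bar>?c3\<bar> + \<bar>?c3\<bar> * (1 / real N)" by simp
    also have "\<dots> \<le> \<bar>?c2\<bar> + 4 * \<bar>?c3\<bar>" using mult_left_mono[OF inv, of "\<bar>?c3\<bar>"] by simp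
    finally show ?thesis using E3 by linarith
  next
    case 5
    then have "config N r x k = x k" using r by (auto simp: config_def)
    then show ?thesis using box[OF 5] E1 by simp
  qed
qed

lemma abs_comb:
  fixes A p u v w E :: real
  assumes "\<bar>A\<bar> \<le> p" "\<bar>u\<bar> \<le> E" "\<bar>v\<bar> \<le> E" "\<bar>w\<bar> \<le> E"
  shows "\<bar>A + (u + v - 2 * w)\<bar> \<le> p + 4 * E"
  using assms unfolding abs_le_iff by linarith

lemma ham_box:
  fixes x :: "int \<Rightarrow> real"
  assumes N: "N \<ge> 1" and box: "\<And>k. k \<in> {1..int N - 1} \<Longrightarrow> \<bar>x k - Qf N r k\<bar> \<le> 1"
  shows "hamiltonian N (config N r x) \<le> (real N + 1) * (C0 r)\<^sup>2 / 2"
proof -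
  let ?\<phi> = "config N r x"
  have e: "\<bar>?\<phi> j - Qf N r j\<bar> \<le> EE r" if "-1 \<le> j" "j \<le> int N + 1" for j
    by (rule config_Q[OF N box that])
  have Dk: "(?\<phi> (k+1) + ?\<phi> (k-1) - 2 * ?\<phi> k)\<^sup>2 / 2 \<le> (C0 r)\<^sup>2 / 2" if k: "k \<in> {0..int N}" for k
  proof -
    have d: "?\<phi> (k+1) + ?\<phi> (k-1) - 2 * ?\<phi> k = (2 * cc2 r + 6 * cc3 r * (of_int k / real N))
        + ((?\<phi> (k+1) - Qf N r (k+1)) + (?\<phi> (k-1) - Qf N r (k-1)) - 2 * (?\<phi> k - Qf N r k))"
      using DQ[OF N, of r k] by simp
    have kN: "\<bar>of_int k / real N\<bar> \<le> 1" using k N by auto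
    have "\<bar>2 * cc2 r + 6 * cc3 r * (of_int k / real N)\<bar> \<le> \<bar>2 * cc2 r\<bar> + \<bar>6 * cc3 r * (of_int k / real N)\<bar>"
      by (rule abs_triangle_ineq)
    also have "\<bar>6 * cc3 r * (of_int k / real N)\<bar> = 6 * \<bar>cc3 r\<bar> * \<bar>of_int k / real N\<bar>" by (simp add: abs_mult)
    also have "\<dots> \<le> 6 * \<bar>cc3 r\<bar> * 1" by (intro mult_left_mono kN) simp
    finally have a1: "\<bar>2 * cc2 r + 6 * cc3 r * (of_int k / real N)\<bar> \<le> 2 * \<bar>cc2 r\<bar> + 6 * \<bar>cc3 r\<bar>" by simp
    have e1: "\<bar>?\<phi> (k+1) - Qf N r (k+1)\<bar> \<le> EE r" using k by (intro e) auto
    have e2: "\<bar>?\<phi> (k-1) - Qf N r (k-1)\<bar> \<le> EE r" using k by (intro e) auto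
    have e3: "\<bar>?\<phi> k - Qf N r k\<bar> \<le> EE r" using k by (intro e) auto
    have "\<bar>?\<phi> (k+1) + ?\<phi> (k-1) - 2 * ?\<phi> k\<bar> \<le> C0 r"
      unfolding d C0_def using abs_comb[OF a1 e1 e2 e3] by (simp add: algebra_simps)
    then have "(?\<phi> (k+1) + ?\<phi> (k-1) - 2 * ?\<phi> k)\<^sup>2 \<le> (C0 r)\<^sup>2"
      by (metis abs_le_square_iff abs_of_nonneg abs_ge_zero order_trans abs_le_D1 power2_abs)
    then show ?thesis by simp
  qed
  have "hamiltonian N ?\<phi> \<le> of_nat (card {0..int N}) * ((C0 r)\<^sup>2 / 2)"
    unfolding hamiltonian_def by (rule sum_bounded_above) (use Dk in simp)
  also have "of_nat (card {0..int N}) = real N + 1" by simp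
  finally show ?thesis by simp
qed

lemma Z_lower:
  assumes N: "N \<ge> 1" and eps: "\<epsilon> \<ge> 0"
  shows "ennreal (exp (- ((real N + 1) * (C0 r)\<^sup>2 / 2))) \<le> (\<integral>\<^sup>+ x. ennreal (exp (- hamiltonian N (config N r x))) \<partial>interior_measure N \<epsilon>)"
proof -
  interpret P: product_sigma_finite "\<lambda>_::int. ref_measure \<epsilon>"
    by (simp add: product_sigma_finite_def sigma_finite_ref)
  let ?I = "{1..int N - 1}"
  let ?B = "PiE ?I (\<lambda>k. {Qf N r k - 1..Qf N r k + 1})"
  let ?c = "ennreal (exp (- ((real N + 1) * (C0 r)\<^sup>2 / 2)))"
  have Bs: "?B \<in> sets (PiM ?I (\<lambda>_. ref_measure \<epsilon>))"
    by (rule sets_PiM_I_finite) auto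
  have "emeasure (PiM ?I (\<lambda>_. ref_measure \<epsilon>)) ?B = (\<Prod>k\<in>?I. emeasure (ref_measure \<epsilon>) {Qf N r k - 1..Qf N r k + 1})"
    by (rule P.emeasure_PiM) auto
  also have "\<dots> \<ge> 1"
  proof (rule prod_ge_1)
    fix k
    have "emeasure (ref_measure \<epsilon>) {Qf N r k - 1..Qf N r k + 1} = ennreal \<epsilon> * indicator {Qf N r k - 1..Qf N r k + 1} 0 + emeasure lborel {Qf N r k - 1..Qf N r k + 1}"
      by (rule emeasure_ref) simp
    also have "\<dots> \<ge> emeasure lborel {Qf N r k - 1..Qf N r k + 1}" by simp
    finally show "1 \<le> emeasure (ref_measure \<epsilon>) {Qf N r k - 1..Qf N r k + 1}"
      by (rule order_trans[rotated]) simp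
  qed
  finally have mB: "1 \<le> emeasure (PiM ?I (\<lambda>_. ref_measure \<epsilon>)) ?B" .
  have "?c = ?c * 1" by simp
  also have "\<dots> \<le> ?c * emeasure (PiM ?I (\<lambda>_. ref_measure \<epsilon>)) ?B" by (intro mult_left_mono mB) simp
  also have "\<dots> = (\<integral>\<^sup>+ x. ?c * indicator ?B x \<partial>PiM ?I (\<lambda>_. ref_measure \<epsilon>))"
    by (rule nn_integral_cmult_indicator[symmetric, OF Bs])
  also have "\<dots> \<le> (\<integral>\<^sup>+ x. ennreal (exp (- hamiltonian N (config N r x))) \<partial>PiM ?I (\<lambda>_. ref_measure \<epsilon>))"
  proof (rule nn_integral_mono)
    fix x
    show "?c * indicator ?B x \<le> ennreal (exp (- hamiltonian N (config N r x)))"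
    proof (cases "x \<in> ?B")
      case True
      have "\<bar>x k - Qf N r k\<bar> \<le> 1" if "k \<in> ?I" for k
        using True that by (auto simp: PiE_def Pi_def)
      then have "hamiltonian N (config N r x) \<le> (real N + 1) * (C0 r)\<^sup>2 / 2" by (rule ham_box[OF N])
      then show ?thesis using True by simp
    qed simp
  qed
  finally show ?thesis unfolding interior_measure_def .
qed

lemma prob_bound:
  assumes N: "N \<ge> 2" and eps: "\<epsilon> \<ge> 0" and r: "r = (a, \<alpha>, b, \<beta>)" and c: "c \<ge> 0"
  shows "measure (gamma N \<epsilon> r)
           {x \<in> space (gamma N \<epsilon> r). (\<lambda>t. profile N (config N r x) (clamp01 t)) \<notin> apply_bcontfun ` Kset (\<bar>a\<bar> + (\<bar>\<alpha>\<bar> + c + 1)) (\<bar>\<alpha>\<bar> + c + 1)}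
         \<le> exp (- (c * real N / 2)) * (\<epsilon> + sqrt (4 * pi)) ^ (N - 1) / exp (- ((real N + 1) * (C0 r)\<^sup>2 / 2))"
proof -
  let ?M = "interior_measure N \<epsilon>"
  let ?H = "\<lambda>x. hamiltonian N (config N r x)"
  define Z where "Z = (\<integral>\<^sup>+ y. ennreal (exp (- ?H y)) \<partial>?M)"
  define Zh where "Zh = (\<integral>\<^sup>+ y. ennreal (exp (- ?H y / 2)) \<partial>?M)"
  define E where "E = exp (- (c * real N / 2))"
  define G where "G = \<epsilon> + sqrt (4 * pi)"
  define z0 where "z0 = exp (- ((real N + 1) * (C0 r)\<^sup>2 / 2))"
  define R where "R = E * G ^ (N - 1) / z0"
  define f where "f x = ennreal (exp (- ?H x)) / Z" for x
  have G0: "G \<ge> 0" using eps by (simp add: G_def)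
  have z0: "z0 > 0" by (simp add: z0_def)
  have R0: "R \<ge> 0" using G0 z0 by (simp add: R_def E_def)
  have gam: "gamma N \<epsilon> r = density ?M f" unfolding gamma_def f_def Z_def ..
  have Hm[measurable]: "?H \<in> borel_measurable ?M" unfolding interior_measure_def by measurable
  have fm[measurable]: "f \<in> borel_measurable ?M" unfolding f_def by measurable
  define T where "T = {x \<in> space ?M. c * real N < ?H x}"
  have Ts: "T \<in> sets ?M" unfolding T_def by measurable
  have Zlow: "ennreal z0 \<le> Z" unfolding z0_def Z_def by (rule Z_lower) (use N eps in auto)
  have Zpos: "Z > 0" using Zlow z0 by (metis ennreal_less_zero_iff less_le_trans)
  have Zh_le: "Zh \<le> ennreal G ^ (N - 1)" unfolding Zh_def G_def by (rule Zhalf_bound[OF N eps])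
  let ?S = "{x \<in> space (gamma N \<epsilon> r). (\<lambda>t. profile N (config N r x) (clamp01 t)) \<notin> apply_bcontfun ` Kset (\<bar>a\<bar> + (\<bar>\<alpha>\<bar> + c + 1)) (\<bar>\<alpha>\<bar> + c + 1)}"
  have ST: "?S \<subseteq> T"
  proof
    fix x assume x: "x \<in> ?S"
    have "\<not> ?H x \<le> c * real N"
    proof
      assume H: "?H x \<le> c * real N"
      have N1: "N \<ge> 1" using N by simp
      have "(\<lambda>t. profile N (config N r x) (clamp01 t)) \<in> apply_bcontfun ` Kset (\<bar>a\<bar> + (\<bar>\<alpha>\<bar> + c + 1)) (\<bar>\<alpha>\<bar> + c + 1)"
        by (rule profile_in_K[OF N1 r H c])
      then show False using x by simp
    qed
    then show "x \<in> T" using x by (simp add: T_def gam)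
  qed
  have "emeasure (gamma N \<epsilon> r) ?S \<le> emeasure (gamma N \<epsilon> r) T"
    by (rule emeasure_mono[OF ST]) (simp add: gam Ts)
  also have "\<dots> = (\<integral>\<^sup>+ x. f x * indicator T x \<partial>?M)" unfolding gam by (rule emeasure_density[OF fm Ts])
  also have "\<dots> \<le> (\<integral>\<^sup>+ x. ennreal (E * exp (- ?H x / 2)) * inverse Z \<partial>?M)"
  proof (rule nn_integral_mono)
    fix x
    show "f x * indicator T x \<le> ennreal (E * exp (- ?H x / 2)) * inverse Z"
    proof (cases "x \<in> T")
      case True
      then have "c * real N < ?H x" by (simp add: T_def)
      then have "exp (- ?H x) \<le> E * exp (- ?H x / 2)"
        unfolding E_def by (simp add: exp_add[symmetric])
      then have "ennreal (exp (- ?H x)) \<le> ennreal (E * exp (- ?H x / 2))" by (rule ennreal_leI)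
      then show ?thesis using True unfolding f_def divide_ennreal_def by (simp add: mult_right_mono)
    qed simp
  qed
  also have "\<dots> = (\<integral>\<^sup>+ x. ennreal E * ennreal (exp (- ?H x / 2)) \<partial>?M) * inverse Z"
    by (subst nn_integral_multc) (simp_all add: ennreal_mult E_def)
  also have "\<dots> = ennreal E * Zh * inverse Z"
    unfolding Zh_def by (subst nn_integral_cmult) simp_all
  also have "\<dots> = (ennreal E * Zh) / Z" by (simp add: divide_ennreal_def)
  also have "\<dots> \<le> ennreal R"
  proof (rule divide_le_posI_ennreal[OF Zpos])
    have "ennreal E * Zh \<le> ennreal E * ennreal G ^ (N - 1)" by (intro mult_left_mono Zh_le) simp
    also have "\<dots> = ennreal z0 * ennreal R"
      using z0 G0 by (simp add: R_def ennreal_mult[symmetric] ennreal_power E_def)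
    also have "\<dots> \<le> Z * ennreal R" by (intro mult_right_mono Zlow) simp
    finally show "ennreal E * Zh \<le> Z * ennreal R" .
  qed
  finally have "emeasure (gamma N \<epsilon> r) ?S \<le> ennreal R" .
  then have "measure (gamma N \<epsilon> r) ?S \<le> R"
    unfolding measure_def by (rule enn2real_leI[OF R0])
  then show ?thesis by (simp add: R_def E_def G_def z0_def)
qed

theorem lemma3p7:
  fixes \<epsilon> :: real and r :: "real \<times> real \<times> real \<times> real"
  assumes "\<epsilon> \<ge> 0"
  shows "\<forall>M::real. \<exists>K :: (real \<Rightarrow>\<^sub>C real) set.
           compact K \<and>
           limsup (\<lambda>N::nat. ereal (1 / real N) *
             ereal_ln (measure (gamma N \<epsilon> r)
               {x \<in> space (gamma N \<epsilon> r).
                  (\<lambda>t. profile N (config N r x) (clamp01 t)) \<notin> apply_bcontfun ` K}))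
           \<le> ereal (- M)"
proof (intro allI)
  fix M :: real
  have eps: "\<epsilon> \<ge> 0" by fact
  obtain a \<alpha> b \<beta> where r: "r = (a, \<alpha>, b, \<beta>)" by (cases r) auto
  define G where "G = \<epsilon> + sqrt (4 * pi)"
  define C where "C = (C0 r)\<^sup>2"
  define c where "c = 2 * max 0 (M + ln G + C)"
  define L where "L = \<bar>\<alpha>\<bar> + c + 1"
  have c0: "c \<ge> 0" by (simp add: c_def)
  have L0: "L \<ge> 0" using c0 by (simp add: L_def)
  have C0: "C \<ge> 0" by (simp add: C_def)
  have G1: "G \<ge> 1"
  proof -
    have "1 \<le> 4 * pi" using pi_gt3 by simp
    then have s: "1 \<le> sqrt (4 * pi)" by simp
    show ?thesis using eps s unfolding G_def by linarith
  qed
  have lnG: "ln G \<ge> 0" using G1 by simp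
  have cM: "M + ln G + C \<le> c / 2" by (simp add: c_def)
  show "\<exists>K :: (real \<Rightarrow>\<^sub>C real) set. compact K \<and>
           limsup (\<lambda>N::nat. ereal (1 / real N) *
             ereal_ln (measure (gamma N \<epsilon> r)
               {x \<in> space (gamma N \<epsilon> r).
                  (\<lambda>t. profile N (config N r x) (clamp01 t)) \<notin> apply_bcontfun ` K}))
           \<le> ereal (- M)"
  proof (intro exI conjI)
    show "compact (Kset (\<bar>a\<bar> + L) L)" by (rule compact_Kset[OF L0])
    show "limsup (\<lambda>N::nat. ereal (1 / real N) *
             ereal_ln (measure (gamma N \<epsilon> r)
               {x \<in> space (gamma N \<epsilon> r).
                  (\<lambda>t. profile N (config N r x) (clamp01 t)) \<notin> apply_bcontfun ` Kset (\<bar>a\<bar> + L) L}))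
           \<le> ereal (- M)"
    proof (rule Limsup_bounded, unfold eventually_sequentially, intro exI allI impI)
      fix N :: nat assume N: "2 \<le> N"
      define P where "P = measure (gamma N \<epsilon> r)
               {x \<in> space (gamma N \<epsilon> r).
                  (\<lambda>t. profile N (config N r x) (clamp01 t)) \<notin> apply_bcontfun ` Kset (\<bar>a\<bar> + L) L}"
      define Rr where "Rr = exp (- (c * real N / 2)) * G ^ (N - 1) / exp (- ((real N + 1) * C / 2))"
      have PR: "P \<le> Rr" unfolding P_def Rr_def L_def G_def C_def by (rule prob_bound[OF N eps r c0])
      have Npos: "real N > 0" using N by simp
      show "ereal (1 / real N) * ereal_ln P \<le> ereal (- M)"
      proof (cases "P \<le> 0")
        case True
        then show ?thesis using Npos by (simp add: ereal_ln_def)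
      next
        case False
        then have P0: "P > 0" by simp
        have Rr0: "Rr > 0" using G1 by (simp add: Rr_def)
        have "ln P \<le> ln Rr" using P0 Rr0 PR by simp
        also have "ln Rr = - (c * real N / 2) + real (N - 1) * ln G + (real N + 1) * C / 2"
          using G1 by (simp add: Rr_def ln_div ln_mult ln_realpow)
        also have "\<dots> \<le> - (c * real N / 2) + real N * ln G + real N * C"
        proof -
          have "real (N - 1) * ln G \<le> real N * ln G" using lnG by (intro mult_right_mono) auto
          moreover have "(real N + 1) * C / 2 \<le> real N * C"
          proof -
            have "C * 1 \<le> C * real N" using N C0 by (intro mult_left_mono) auto
            then show ?thesis by (simp add: field_simps)
          qed
          ultimately show ?thesis by linarith
        qed
        also have "\<dots> = real N * (- (c / 2) + ln G + C)" by (simp add: algebra_simps)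
        also have "\<dots> \<le> real N * (- M)" using cM Npos by (intro mult_left_mono) auto
        finally have "ln P \<le> real N * (- M)" .
        then have "ln P / real N \<le> - M" using Npos by (simp add: divide_le_eq mult.commute)
        then show ?thesis using P0 by (simp add: ereal_ln_def)
      qed
    qed
  qed
qed

end
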